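(* Let $h\in\mathbb{R}[T]$. Then $K_h\in\Lambda'$, $\det K_h=1$, and $K_h\cdot{}^{\gamma}\!\left(K_h\right)^{-1}=M_h$. Consequently, on the open $\mathbb{C}^*$-stable subset $U=Y\setminus V(ab)$ (which is preserved by every $\mu_h$), one has $\mu_h|_U=\psi'_h\circ\mu_0|_U\circ(\psi'_h)^{-1}$; in particular all the restrictions $\mu_h|_U$, $h\in\mathbb{R}[T]$, are equivalent real circle forms on $U$ (equivalence via $\mathbb{C}^*$-equivariant automorphisms of $U$).
   Context: For $k\ge1$, $W_k=\mathbb{C}^2$ is the $\mathbb{C}^*$-module with weights $(k,-k)$. Fix $m\ge1$, $n=2m+1$, and $Y=W_2\times W_n$ with coordinates $(a,b,x,y)$, $t\cdot(a,b,x,y)=(t^2a,t^{-2}b,t^nx,t^{-n}y)$; $\sigma(t)=\overline{t}^{-1}$; a real circle form is an antiholomorphic involution $\mu$ with $\mu(t\cdot p)=\sigma(t)\cdot\mu(p)$. Let $\mu_0(a,b,x,y)=(\overline{b},\overline{a},\overline{y},\overline{x})$, $T=ab$. Let $\Lambda'$ be the group of matrices $M=\begin{pmatrix}P(T)& a^nQ(T)\\ b^nS(T)& R(T)\end{pmatrix}$ with $P,Q,R,S\in\mathbb{C}[T,T^{-1}]$ and $\det M=cT^k$, $c\in\mathbb{C}^*$, $k\in\mathbb{Z}$; for such $M$ define ${}^{\gamma}M=\begin{pmatrix}\overline{R}(T)& a^n\overline{S}(T)\\ b^n\overline{Q}(T)& \overline{P}(T)\end{pmatrix}$, where the bar conjugates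 coefficients. For $h\in\mathbb{R}[T]$ (with $h=h(ab)$): $M_h=\begin{pmatrix}1-Th^2 & a^nh^n\\ -b^nh^n & \sum_{j=0}^{n-1}(Th^2)^j\end{pmatrix}$, $\varphi_h(a,b,x,y)=(a,b,M_h\binom{x}{y})$, $\mu_h=\varphi_h\circ\mu_0$, and $$K_h=\begin{pmatrix}1 & a^n\dfrac{h}{T^m}\\[2mm] b^n\dfrac{h\sum_{j=0}^{m-1}(Th^2)^j}{T^m} & \sum_{j=0}^{m}(Th^2)^j\end{pmatrix},$$ with $\psi'_h$ the automorphism of $U$ given by $\psi'_h(a,b,x,y)=(a,b,K_h\binom{x}{y})$. *)

theory Defs
  imports "HOL-Analysis.Analysis" "HOL-Computational_Algebra.Polynomial"
begin

text \<open>Points of Y = W_2 x W_n are quadruples (a,b,x,y).\<close>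
type_synonym pt = "complex \<times> complex \<times> complex \<times> complex"

definition act :: "nat \<Rightarrow> complex \<Rightarrow> pt \<Rightarrow> pt" where
  "act n t p = (case p of (a,b,x,y) \<Rightarrow>
     (t^2 * a, inverse t ^ 2 * b, t^n * x, inverse t ^ n * y))"

definition sigma :: "complex \<Rightarrow> complex" where
  "sigma t = inverse (cnj t)"

definition U :: "pt set" where
  "U = {(a,b,x,y). a * b \<noteq> 0}"

definition mat2 :: "complex \<Rightarrow> complex \<Rightarrow> complex \<Rightarrow> complex \<Rightarrow> complex^2^2" where
  "mat2 p q s r = (\<chi> i j. if i = 1 then (if j = 1 then p else q) else (if j = 1 then s else r))"

definition vec2 :: "complex \<Rightarrow> complex \<Rightarrow> complex^2" where
  "vec2 x y = (\<chi> i. if i = 1 then x else y)"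

definition apply_mat :: "(complex \<Rightarrow> complex \<Rightarrow> complex^2^2) \<Rightarrow> pt \<Rightarrow> pt" where
  "apply_mat M p = (case p of (a,b,x,y) \<Rightarrow>
     (let v = M a b *v vec2 x y in (a, b, v $ 1, v $ 2)))"

text \<open>Laurent polynomials in T: a pair (p,k) stands for p(T)/T^k.\<close>
type_synonym laurent = "complex poly \<times> nat"

definition leval :: "laurent \<Rightarrow> complex \<Rightarrow> complex" where
  "leval L t = poly (fst L) t / t ^ snd L"

definition lconj :: "laurent \<Rightarrow> laurent" where
  "lconj L = (map_poly cnj (fst L), snd L)"

text \<open>A quadruple (P,Q,S,R) of Laurent polynomials represents the matrix
  [[P(T), a^n Q(T)], [b^n S(T), R(T)]] with T = ab.\<close>
type_synonym quad = "laurent \<times> laurent \<times> laurent \<times> laurent"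

definition Lmat :: "nat \<Rightarrow> quad \<Rightarrow> complex \<Rightarrow> complex \<Rightarrow> complex^2^2" where
  "Lmat n M a b = (case M of (P,Q,S,R) \<Rightarrow>
     mat2 (leval P (a*b)) (a^n * leval Q (a*b)) (b^n * leval S (a*b)) (leval R (a*b)))"

text \<open>Membership in the group Lambda': det M = c T^k, c nonzero, k integer
  (identity of Laurent polynomials, checked on T = ab nonzero).\<close>
definition in_Lambda' :: "nat \<Rightarrow> quad \<Rightarrow> bool" where
  "in_Lambda' n M \<longleftrightarrow> (\<exists>c k. c \<noteq> 0 \<and>
     (\<forall>a b. a * b \<noteq> 0 \<longrightarrow> det (Lmat n M a b) = c * (a*b) powi k))"

definition gammaq :: "quad \<Rightarrow> quad" where
  "gammaq M = (case M of (P,Q,S,R) \<Rightarrow> (lconj R, lconj S, lconj Q, lconj P))"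

definition hc :: "real poly \<Rightarrow> complex poly" where
  "hc h = map_poly complex_of_real h"

definition Tpoly :: "complex poly" where "Tpoly = [:0, 1:]"

text \<open>K_h as a quadruple of Laurent polynomials (m with n = 2m+1).\<close>
definition Kq :: "nat \<Rightarrow> real poly \<Rightarrow> quad" where
  "Kq m h = ((1, 0),
             (hc h, m),
             (hc h * (\<Sum>j<m. (Tpoly * hc h ^ 2) ^ j), m),
             ((\<Sum>j\<le>m. (Tpoly * hc h ^ 2) ^ j), 0))"

definition Mh :: "nat \<Rightarrow> real poly \<Rightarrow> complex \<Rightarrow> complex \<Rightarrow> complex^2^2" where
  "Mh n h a b = (let T = a*b; hv = poly (hc h) T in
     mat2 (1 - T * hv^2) (a^n * hv^n) (- (b^n * hv^n)) (\<Sum>j<n. (T * hv^2)^j))"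

definition mu0 :: "pt \<Rightarrow> pt" where
  "mu0 p = (case p of (a,b,x,y) \<Rightarrow> (cnj b, cnj a, cnj y, cnj x))"

definition phi :: "nat \<Rightarrow> real poly \<Rightarrow> pt \<Rightarrow> pt" where
  "phi n h = apply_mat (Mh n h)"

definition mu :: "nat \<Rightarrow> real poly \<Rightarrow> pt \<Rightarrow> pt" where
  "mu n h = phi n h \<circ> mu0"

definition psi' :: "nat \<Rightarrow> real poly \<Rightarrow> pt \<Rightarrow> pt" where
  "psi' m h = apply_mat (Lmat (2*m+1) (Kq m h))"

definition equivariant_on :: "nat \<Rightarrow> pt set \<Rightarrow> (pt \<Rightarrow> pt) \<Rightarrow> bool" where
  "equivariant_on n S f \<longleftrightarrow> (\<forall>t p. t \<noteq> 0 \<longrightarrow> p \<in> S \<longrightarrow> f (act n t p) = act n t (f p))"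

end

theory Submission
  imports Defs
begin

lemma mat2_nth[simp]: "mat2 p q c r $ 1 $ 1 = p" "mat2 p q c r $ 1 $ 2 = q"
  "mat2 p q c r $ 2 $ 1 = c" "mat2 p q c r $ 2 $ 2 = r"
  by (simp_all add: mat2_def)

lemma vec2_nth[simp]: "vec2 x y $ 1 = x" "vec2 x y $ 2 = y"
  by (simp_all add: vec2_def)

lemma mat2_eq_iff: "mat2 p q c r = mat2 p' q' c' r' \<longleftrightarrow> p = p' \<and> q = q' \<and> c = c' \<and> r = r'"
  by (auto simp: vec_eq_iff forall_2 mat2_def)

lemma mat2_mult: "mat2 p q c r ** mat2 p2 q2 s2 r2 =
  mat2 (p*p2+q * s2) (p*q2+q*r2) (c * p2+r * s2) (c * q2+r*r2)"
  by (simp add: vec_eq_iff forall_2 matrix_matrix_mult_def sum_2)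

lemma mat2_one: "(mat 1 :: complex^2^2) = mat2 1 0 0 1"
  by (simp add: vec_eq_iff forall_2 mat_def)

lemma mat2_det: "det (mat2 p q c r) = p*r - q*c"
  by (simp add: det_2)

lemma mat2_mulv: "(mat2 p q c r *v v) $ 1 = p * v$1 + q * v$2"
   "(mat2 p q c r *v v) $ 2 = c * v$1 + r * v$2"
  by (simp_all add: matrix_vector_mult_def sum_2)

lemma vec2_eta: "vec2 (v$1) (v$2) = v"
  by (simp add: vec_eq_iff forall_2)

lemma apply_mat_simp: "apply_mat M (a,b,x,y) = (a, b, (M a b *v vec2 x y)$1, (M a b *v vec2 x y)$2)"
  by (simp add: apply_mat_def Let_def)

lemma apply_mat_comp:
  "apply_mat M (apply_mat N (a,b,x,y)) = apply_mat (\<lambda>a b. M a b ** N a b) (a,b,x,y)"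
  by (simp add: apply_mat_simp vec2_eta matrix_vector_mul_assoc)

lemma apply_mat_id:
  "M a b = mat 1 \<Longrightarrow> apply_mat M (a,b,x,y) = (a,b,x,y)"
  by (simp add: apply_mat_simp)

lemma equiv_gen:
  fixes P Q S R :: "complex \<Rightarrow> complex"
  assumes "t \<noteq> 0"
  shows "apply_mat (\<lambda>a b. mat2 (P(a*b)) (a^n*Q(a*b)) (b^n*S(a*b)) (R(a*b))) (act n t p)
       = act n t (apply_mat (\<lambda>a b. mat2 (P(a*b)) (a^n*Q(a*b)) (b^n*S(a*b)) (R(a*b))) p)"
proof -
  obtain a b x y where p: "p = (a,b,x,y)" by (cases p) auto
  have T: "t^2*a*(inverse t^2*b) = a*b" using assms by (simp add: field_simps)
  show ?thesis using assms
    by (simp add: p act_def apply_mat_simp mat2_mulv T power_mult_distrib field_simps flip: power_mult)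
      (simp add: mult_2_right power_add)
qed

lemma alg1:
  fixes A B u w :: complex
  assumes "(A+w)^2 - u*A^2 = B"
  shows "(A + w + u*w)^2 - u*(A+w)^2 = B + u*w*w + u*u*w*w"
proof -
  have "(A + w + u*w)^2 - u*(A+w)^2 = ((A+w)^2 - u*A^2) + u*w*w + u*u*w*w"
    by (simp add: power2_eq_square algebra_simps)
  then show ?thesis using assms by simp
qed

lemma sum_ids:
  fixes u :: complex
  shows "(\<Sum>j\<le>m. u^j) - (\<Sum>j<m. u^j) = u^m \<and> (\<Sum>j\<le>m. u^j) - u*(\<Sum>j<m. u^j) = 1
    \<and> (\<Sum>j\<le>m. u^j)^2 - u*(\<Sum>j<m. u^j)^2 = (\<Sum>j<2*m+1. u^j)"
proof (induction m)
  case 0 then show ?case by simp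
next
  case (Suc m)
  define A where "A = (\<Sum>j<m. u^j)"
  define B where "B = (\<Sum>j<2*m+1. u^j)"
  define w where "w = u^m"
  have R: "(\<Sum>j\<le>m. u^j) = A + w" by (simp add: A_def w_def lessThan_Suc_atMost[symmetric])
  have R': "(\<Sum>j\<le>Suc m. u^j) = A + w + u*w" by (simp add: R w_def)
  have A': "(\<Sum>j<Suc m. u^j) = A + w" by (simp add: A_def w_def)
  have B': "(\<Sum>j<2*Suc m+1. u^j) = B + u*w*w + u*u*w*w"
  proof -
    have "u^(2*m+1) = u*w*w" "u^(2*m+2) = u*u*w*w" unfolding w_def
      by (simp_all add: power_add mult_2 flip: mult.assoc)
    then show ?thesis by (simp add: B_def del: power_Suc power_Suc2)
  qed
  have IH1: "A + w - u*A = 1" and IH2: "(A+w)^2 - u*A^2 = B"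
    using Suc.IH unfolding R A_def[symmetric] B_def[symmetric] by auto
  have e2: "(A + w + u*w) - u*(A + w) = 1" proof -
    have "(A + w + u*w) - u*(A + w) = A + w - u*A" by (simp add: algebra_simps)
    then show ?thesis using IH1 by simp
  qed
  show ?case using e2 R' A' B' alg1[OF IH2] by (simp add: w_def)
qed


definition Hv :: "real poly \<Rightarrow> complex \<Rightarrow> complex" where "Hv h z = poly (hc h) z"
definition Af :: "nat \<Rightarrow> real poly \<Rightarrow> complex \<Rightarrow> complex" where
  "Af m h z = (\<Sum>j<m. (z * Hv h z ^ 2) ^ j)"
definition Rf :: "nat \<Rightarrow> real poly \<Rightarrow> complex \<Rightarrow> complex" where
  "Rf m h z = (\<Sum>j\<le>m. (z * Hv h z ^ 2) ^ j)"

definition Km where "Km m h a b = mat2 1 (a^(2*m+1) * (Hv h (a*b) / (a*b)^m))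
   (b^(2*m+1) * (Hv h (a*b) * Af m h (a*b) / (a*b)^m)) (Rf m h (a*b))"
definition Ki where "Ki m h a b = mat2 (Rf m h (a*b)) (a^(2*m+1) * (- (Hv h (a*b) / (a*b)^m)))
   (b^(2*m+1) * (- (Hv h (a*b) * Af m h (a*b) / (a*b)^m))) 1"
definition Gm where "Gm m h a b = mat2 (Rf m h (a*b)) (a^(2*m+1) * (Hv h (a*b) * Af m h (a*b) / (a*b)^m))
   (b^(2*m+1) * (Hv h (a*b) / (a*b)^m)) 1"
definition Gi where "Gi m h a b = mat2 1 (a^(2*m+1) * (- (Hv h (a*b) * Af m h (a*b) / (a*b)^m)))
   (b^(2*m+1) * (- (Hv h (a*b) / (a*b)^m))) (Rf m h (a*b))"

lemma hc_real: "poly.coeff (hc h) n \<in> \<real>"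
  by (simp add: hc_def coeff_map_poly)

lemma Hv_cnj: "cnj (Hv h (cnj z)) = Hv h z" "Hv h (cnj z) = cnj (Hv h z)"
  using poly_cnj_real[OF hc_real, of h] by (auto simp: Hv_def)

lemma Hv_cnj2: "cnj (Hv h (cnj a * cnj b)) = Hv h (a*b)"
   "cnj (poly (hc h) (cnj a * cnj b)) = poly (hc h) (a*b)"
  using Hv_cnj(1)[of h "a*b"] by (simp_all add: Hv_def)

lemma poly_sumT: "poly (\<Sum>j\<in>A. (Tpoly * hc h ^ 2) ^ j) z = (\<Sum>j\<in>A. (z * Hv h z ^ 2) ^ j)"
  by (simp add: poly_sum Tpoly_def Hv_def)

lemma Lmat_K: "Lmat (2*m+1) (Kq m h) a b = Km m h a b"
  by (simp add: Lmat_def Kq_def Km_def leval_def poly_sumT Af_def Rf_def Hv_def)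

lemma cnj_sum_pow: "cnj (\<Sum>j\<in>A. (cnj z * Hv h (cnj z) ^ 2) ^ j) = (\<Sum>j\<in>A. (z * Hv h z ^ 2) ^ j)"
  by (simp add: Hv_cnj)

lemma Lmat_G: "Lmat (2*m+1) (gammaq (Kq m h)) a b = Gm m h a b"
proof -
  have 1: "map_poly cnj 1 = (1::complex poly)" by (simp add: map_poly_pCons one_pCons)
  show ?thesis
  by (simp add: Lmat_def Kq_def Gm_def gammaq_def lconj_def leval_def 1 poly_sumT Af_def Rf_def
     Hv_cnj cnj_sum_pow Hv_cnj2 flip: Hv_def)
qed


lemma cancel:
  fixes a b X Y :: complex
  assumes "a*b \<noteq> 0"
  shows "a^(2*m+1)*(X/(a*b)^m) * (b^(2*m+1)*(Y/(a*b)^m)) = a*b*X*Y"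
proof -
  have Tm: "(a*b)^m \<noteq> 0" using assms by simp
  have "a^(2*m+1)*(X/(a*b)^m) * (b^(2*m+1)*(Y/(a*b)^m))
      = (a*b)^(2*m+1)*X*Y/((a*b)^m*(a*b)^m)"
    by (simp add: power_mult_distrib)
  also have "(a*b)^(2*m+1) = (a*b)^m*(a*b)^m*(a*b)"
    by (simp add: power_add mult_2 )
  finally show ?thesis using Tm by simp
qed

lemma sid:
  fixes z :: complex
  shows "Rf m h z - Af m h z = (z * Hv h z^2)^m"
    "Rf m h z - (z * Hv h z^2) * Af m h z = 1"
    "(Rf m h z)^2 - (z * Hv h z^2) * (Af m h z)^2 = (\<Sum>j<2*m+1. (z * Hv h z^2)^j)"
  using sum_ids[where m=m and u="z * Hv h z^2"] by (simp_all add: Rf_def Af_def)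

lemma KmKi:
  assumes ab: "a*b \<noteq> 0"
  shows "Km m h a b ** Ki m h a b = mat 1"
  "Ki m h a b ** Km m h a b = mat 1"
  "det (Km m h a b) = 1"
  "Gm m h a b ** Gi m h a b = mat 1"
  "Gi m h a b ** Gm m h a b = mat 1"
  "Km m h a b ** Gi m h a b = Mh (2*m+1) h a b"
proof -
  define T where "T = a*b"
  define H where "H = Hv h T"
  define A where "A = Af m h T"
  define R where "R = Rf m h T"
  define u where "u = T * H^2"
  define x1 where "x1 = a^(2*m+1)*(H/T^m)"
  define x2 where "x2 = b^(2*m+1)*(H*A/T^m)"
  define y1 where "y1 = a^(2*m+1)*(H*A/T^m)"
  define y2 where "y2 = b^(2*m+1)*(H/T^m)"
  have Km: "Km m h a b = mat2 1 x1 x2 R" by (simp add: Km_def x1_def x2_def R_def T_def H_def A_def)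
  have Ki: "Ki m h a b = mat2 R (-x1) (-x2) 1" by (simp add: Ki_def x1_def x2_def R_def T_def H_def A_def)
  have Gm: "Gm m h a b = mat2 R y1 y2 1" by (simp add: Gm_def y1_def y2_def R_def T_def H_def A_def)
  have Gi: "Gi m h a b = mat2 1 (-y1) (-y2) R" by (simp add: Gi_def y1_def y2_def R_def T_def H_def A_def)
  have c: "\<And>X Y. a^(2*m+1)*(X/T^m) * (b^(2*m+1)*(Y/T^m)) = T*X*Y"
    using cancel[OF ab] by (simp add: T_def)
  have p1: "x1*x2 = u*A" "x2*x1 = u*A" using c[of H "H*A"]
    by (simp_all add: x1_def x2_def u_def power2_eq_square ac_simps)
  have p2: "y1*y2 = u*A" "y2*y1 = u*A" using c[of "H*A" H]
    by (simp_all add: y1_def y2_def u_def power2_eq_square ac_simps)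
  have p3: "x1*y2 = u" using c[of H H]
    by (simp_all add: x1_def y2_def u_def power2_eq_square ac_simps)
  have p4: "x2*y1 = u*A^2" using c[of "H*A" "H*A"]
    by (simp_all add: x2_def y1_def u_def power2_eq_square ac_simps)
  have s1: "R - u*A = 1" "R - A = u^m" "R^2 - u*A^2 = (\<Sum>j<2*m+1. u^j)"
    using sid[where z=T and m=m and h=h] by (simp_all add: R_def A_def u_def H_def)
  have T0: "T \<noteq> 0" using ab by (simp add: T_def)
  have p5: "x1*R - y1 = a^(2*m+1)*H^(2*m+1)"
  proof -
    have "x1*R - y1 = a^(2*m+1)*H*(R-A)/T^m" using T0 by (simp add: x1_def y1_def field_simps)
    also have "\<dots> = a^(2*m+1)*H*(T^m*H^(2*m))/T^m" using s1(2)
      by (simp add: u_def power_mult_distrib power_mult)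
    also have "\<dots> = a^(2*m+1)*H^(2*m+1)" using T0 by simp
    finally show ?thesis .
  qed
  have p6: "x2 - R*y2 = -(b^(2*m+1)*H^(2*m+1))"
  proof -
    have "x2 - R*y2 = - (b^(2*m+1)*H*(R-A)/T^m)" using T0 by (simp add: x2_def y2_def field_simps)
    also have "\<dots> = - (b^(2*m+1)*H*(T^m*H^(2*m))/T^m)" using s1(2)
      by (simp add: u_def power_mult_distrib power_mult)
    also have "\<dots> = -(b^(2*m+1)*H^(2*m+1))" using T0 by simp
    finally show ?thesis .
  qed
  have Mh: "Mh (2*m+1) h a b = mat2 (1-u) (a^(2*m+1)*H^(2*m+1)) (-(b^(2*m+1)*H^(2*m+1)))
      (\<Sum>j<2*m+1. u^j)"
    by (simp add: Mh_def u_def H_def T_def Hv_def Let_def)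
  show "Km m h a b ** Ki m h a b = mat 1" "Ki m h a b ** Km m h a b = mat 1"
    "det (Km m h a b) = 1" "Gm m h a b ** Gi m h a b = mat 1" "Gi m h a b ** Gm m h a b = mat 1"
    using p1 p2 s1(1)
    by (simp_all add: Km Ki Gm Gi mat2_mult mat2_one mat2_det mat2_eq_iff algebra_simps)
  show "Km m h a b ** Gi m h a b = Mh (2*m+1) h a b"
    unfolding Km Gi Mh mat2_mult mat2_eq_iff
  proof (intro conjI)
    show "1 * 1 + x1 * - y2 = 1 - u" using p3 by simp
    show "1 * - y1 + x1 * R = a ^ (2 * m + 1) * H ^ (2 * m + 1)" using p5 by (simp add: algebra_simps)
    show "x2 * 1 + R * - y2 = - (b ^ (2 * m + 1) * H ^ (2 * m + 1))" using p6 by (simp add: algebra_simps)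
    show "x2 * - y1 + R * R = (\<Sum>j<2 * m + 1. u ^ j)" using p4 s1(3) by (simp add: power2_eq_square)
  qed
qed


lemma matrix_inv_eq:
  fixes A B :: "complex^2^2"
  assumes "A ** B = mat 1" "B ** A = mat 1"
  shows "matrix_inv A = B"
proof -
  have ex: "\<exists>B'. A ** B' = mat 1 \<and> B' ** A = mat 1" using assms by blast
  define B' where "B' = matrix_inv A"
  have "A ** B' = mat 1 \<and> B' ** A = mat 1"
    unfolding B'_def matrix_inv_def by (rule someI_ex[OF ex])
  then have "B' = B' ** (A ** B)" using assms by simp
  also have "\<dots> = B" using \<open>A ** B' = mat 1 \<and> B' ** A = mat 1\<close>
    by (simp add: matrix_mul_assoc)
  finally show ?thesis by (simp add: B'_def)
qed

lemma inU: "(a,b,x,y) \<in> U \<longleftrightarrow> a*b \<noteq> 0" by (simp add: U_def)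

lemma apply_mat_U: "p \<in> U \<Longrightarrow> apply_mat M p \<in> U"
  by (cases p) (simp add: apply_mat_simp inU)

lemma mu0_U: "p \<in> U \<Longrightarrow> mu0 p \<in> U"
  by (cases p) (simp add: mu0_def inU)

lemma act_U: "t \<noteq> 0 \<Longrightarrow> p \<in> U \<Longrightarrow> act n t p \<in> U"
  by (cases p) (simp add: act_def inU field_simps)

lemma KiKm_app: "p \<in> U \<Longrightarrow> apply_mat (Ki m h) (apply_mat (Km m h) p) = p"
   "p \<in> U \<Longrightarrow> apply_mat (Km m h) (apply_mat (Ki m h) p) = p"
  by (cases p, simp add: apply_mat_comp inU KmKi apply_mat_id)+

lemma psi'_eq: "psi' m h = apply_mat (Km m h)"
proof -
  have "Lmat (2*m+1) (Kq m h) = Km m h" by (intro ext) (rule Lmat_K)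
  then show ?thesis by (simp only: psi'_def)
qed

lemma Km_form: "Km m h = (\<lambda>a b. mat2 ((\<lambda>z. 1) (a*b)) (a^(2*m+1) * (\<lambda>z. Hv h z / z^m) (a*b))
   (b^(2*m+1) * (\<lambda>z. Hv h z * Af m h z / z^m) (a*b)) ((\<lambda>z. Rf m h z) (a*b)))"
  by (simp add: Km_def fun_eq_iff)

lemma Ki_form: "Ki m h = (\<lambda>a b. mat2 ((\<lambda>z. Rf m h z) (a*b)) (a^(2*m+1) * (\<lambda>z. - (Hv h z / z^m)) (a*b))
   (b^(2*m+1) * (\<lambda>z. - (Hv h z * Af m h z / z^m)) (a*b)) ((\<lambda>z. 1) (a*b)))"
  by (simp add: Ki_def fun_eq_iff)

lemma Km_equiv: "t \<noteq> 0 \<Longrightarrow> apply_mat (Km m h) (act (2*m+1) t p) = act (2*m+1) t (apply_mat (Km m h) p)"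
  unfolding Km_form by (rule equiv_gen)

lemma Ki_equiv: "t \<noteq> 0 \<Longrightarrow> apply_mat (Ki m h) (act (2*m+1) t p) = act (2*m+1) t (apply_mat (Ki m h) p)"
  unfolding Ki_form by (rule equiv_gen)

lemma Hv_cnj3: "Hv h (cnj b * cnj a) = cnj (Hv h (a*b))"
  using Hv_cnj(2)[of h "a*b"] by (simp add: mult.commute)

lemma ba_comm: "Hv h (b*a) = Hv h (a*b)" "Af m h (b*a) = Af m h (a*b)" "Rf m h (b*a) = Rf m h (a*b)"
  by (simp_all add: mult.commute)

lemma Af_cnj: "Af m h (cnj b * cnj a) = cnj (Af m h (a*b))"
  by (simp add: Af_def Hv_cnj3 mult.commute)
lemma Rf_cnj: "Rf m h (cnj b * cnj a) = cnj (Rf m h (a*b))"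
  by (simp add: Rf_def Hv_cnj3 mult.commute)

lemma mu0_Ki: "mu0 (apply_mat (Ki m h) (a,b,x,y)) = apply_mat (Gi m h) (mu0 (a,b,x,y))"
  by (simp add: mu0_def apply_mat_simp Ki_def Gi_def mat2_mulv Hv_cnj3 Af_cnj Rf_cnj ba_comm
      mult.commute[of "cnj b" "cnj a"])

lemma key:
  assumes "p \<in> U"
  shows "mu (2*m+1) h p = apply_mat (Km m h) (mu0 (apply_mat (Ki m h) p))"
proof -
  obtain a b x y where p: "p = (a,b,x,y)" by (cases p) auto
  have ab: "a*b \<noteq> 0" using assms p by (simp add: inU)
  have ab': "cnj b * cnj a \<noteq> 0" using ab by simp
  have "mu (2*m+1) h p = apply_mat (Mh (2*m+1) h) (cnj b, cnj a, cnj y, cnj x)"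
    by (simp add: p mu_def phi_def mu0_def)
  also have "\<dots> = apply_mat (\<lambda>a b. Km m h a b ** Gi m h a b) (cnj b, cnj a, cnj y, cnj x)"
    by (simp only: apply_mat_simp KmKi(6)[OF ab'])
  also have "\<dots> = apply_mat (Km m h) (apply_mat (Gi m h) (cnj b, cnj a, cnj y, cnj x))"
    by (simp only: apply_mat_comp)
  also have "\<dots> = apply_mat (Km m h) (mu0 (apply_mat (Ki m h) p))"
    by (simp only: p mu0_Ki) (simp add: mu0_def)
  finally show ?thesis .
qed


theorem lemma3p3:
  fixes m :: nat and h :: "real poly"
  assumes "m \<ge> 1"
  defines "n \<equiv> 2 * m + 1"
  shows "in_Lambda' n (Kq m h)
    \<and> (\<forall>a b. a * b \<noteq> 0 \<longrightarrow> det (Lmat n (Kq m h) a b) = 1)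
    \<and> (\<forall>a b. a * b \<noteq> 0 \<longrightarrow>
          Lmat n (Kq m h) a b ** matrix_inv (Lmat n (gammaq (Kq m h)) a b) = Mh n h a b)
    \<and> mu n h ` U \<subseteq> U
    \<and> bij_betw (psi' m h) U U
    \<and> equivariant_on n U (psi' m h)
    \<and> (\<forall>p\<in>U. mu n h p = (psi' m h \<circ> mu0 \<circ> the_inv_into U (psi' m h)) p)
    \<and> (\<forall>h1 h2 :: real poly. \<exists>\<psi>. bij_betw \<psi> U U \<and> equivariant_on n U \<psi>
          \<and> (\<forall>p\<in>U. mu n h1 p = (\<psi> \<circ> mu n h2 \<circ> the_inv_into U \<psi>) p))"
proof -
  have det1: "\<forall>a b. a * b \<noteq> 0 \<longrightarrow> det (Lmat n (Kq m h) a b) = 1"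
    unfolding n_def Lmat_K using KmKi(3) by blast
  have c1: "in_Lambda' n (Kq m h)"
    unfolding in_Lambda'_def using det1 by (intro exI[of _ 1] exI[of _ 0]) simp
  have c3: "\<forall>a b. a * b \<noteq> 0 \<longrightarrow>
          Lmat n (Kq m h) a b ** matrix_inv (Lmat n (gammaq (Kq m h)) a b) = Mh n h a b"
    unfolding n_def Lmat_K Lmat_G using KmKi(6) matrix_inv_eq[OF KmKi(4) KmKi(5)] by simp
  have mu_U: "\<And>h. mu n h ` U \<subseteq> U"
    by (auto simp: mu_def phi_def intro!: apply_mat_U mu0_U)
  have bij: "bij_betw (apply_mat (Km m g)) U U" for g
    by (rule bij_betw_byWitness[where f'="apply_mat (Ki m g)"])
       (auto simp: KiKm_app intro: apply_mat_U)
  have equivK: "\<And>h. equivariant_on n U (apply_mat (Km m h))"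
    unfolding equivariant_on_def n_def by (intro allI impI) (simp only: Km_equiv not_False_eq_True)
  have inv: "the_inv_into U (apply_mat (Km m g)) p = apply_mat (Ki m g) p" if "p \<in> U" for g p
    by (rule the_inv_into_f_eq[OF bij_betw_imp_inj_on[OF bij]])
       (auto simp: KiKm_app apply_mat_U that)
  have keyn: "\<And>h p. p \<in> U \<Longrightarrow> mu n h p = apply_mat (Km m h) (mu0 (apply_mat (Ki m h) p))"
    unfolding n_def by (rule key)
  have c7: "\<forall>p\<in>U. mu n h p = (psi' m h \<circ> mu0 \<circ> the_inv_into U (psi' m h)) p"
    by (simp add: psi'_eq inv keyn)
  have c8: "\<exists>\<psi>. bij_betw \<psi> U U \<and> equivariant_on n U \<psi>
          \<and> (\<forall>p\<in>U. mu n h1 p = (\<psi> \<circ> mu n h2 \<circ> the_inv_into U \<psi>) p)" for h1 h2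
  proof -
    let ?P1 = "apply_mat (Km m h1)" and ?I1 = "apply_mat (Ki m h1)"
    let ?P2 = "apply_mat (Km m h2)" and ?I2 = "apply_mat (Ki m h2)"
    define \<psi> where "\<psi> = ?P1 \<circ> ?I2"
    have b: "bij_betw \<psi> U U" unfolding \<psi>_def
      by (rule bij_betw_byWitness[where f'="?P2 \<circ> ?I1"])
         (auto simp: KiKm_app apply_mat_U intro: apply_mat_U)
    have e: "equivariant_on n U \<psi>"
      unfolding equivariant_on_def \<psi>_def n_def by (intro allI impI) (simp only: o_def Km_equiv Ki_equiv not_False_eq_True)
    have i: "the_inv_into U \<psi> p = ?P2 (?I1 p)" if "p \<in> U" for p
      by (rule the_inv_into_f_eq[OF bij_betw_imp_inj_on[OF b]])
         (auto simp: \<psi>_def KiKm_app apply_mat_U that)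
    have "mu n h1 p = (\<psi> \<circ> mu n h2 \<circ> the_inv_into U \<psi>) p" if p: "p \<in> U" for p
    proof -
      have q: "?P2 (?I1 p) \<in> U" "?I1 p \<in> U" "mu0 (?I1 p) \<in> U"
        using p by (auto intro!: apply_mat_U mu0_U)
      have "(\<psi> \<circ> mu n h2 \<circ> the_inv_into U \<psi>) p = ?P1 (?I2 (mu n h2 (?P2 (?I1 p))))"
        unfolding comp_apply i[OF p] by (simp add: \<psi>_def)
      also have "\<dots> = ?P1 (?I2 (?P2 (mu0 (?I2 (?P2 (?I1 p))))))" using keyn[OF q(1)] by simp
      also have "\<dots> = ?P1 (mu0 (?I1 p))" using q by (simp add: KiKm_app)
      also have "\<dots> = mu n h1 p" using keyn[OF p] by simp
      finally show ?thesis by simp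
    qed
    then show ?thesis using b e by blast
  qed
  show ?thesis
  proof (intro conjI)
    show "bij_betw (psi' m h) U U" unfolding psi'_eq by (rule bij)
    show "equivariant_on n U (psi' m h)" unfolding psi'_eq by (rule equivK)
  qed (rule c1 det1 c3 mu_U c7 allI c8)+
qed

end
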